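(* Let $M$ be an $n$-counter Minsky machine and $k_1,\dots,k_n$ non-negative integers. If the sequent $$l_1\otimes r_1^{k_1}\otimes\cdots\otimes r_n^{k_n},\ !\Phi_M,\ !\mathcal{K}\ \vdash\ l_0$$ is derivable in (propositional) linear logic, then $M$ can go from the initial configuration $(L_1,k_1,\dots,k_n)$ to the halting configuration $(L_0,0,\dots,0)$.
   Context: An $n$-counter Minsky machine $M$ has counters $x_1,\dots,x_n$ with non-negative integer values and a finite list of instructions labelled by labels $L_0,L_1,\dots$, each of one of the forms: (1) $L_i: x_m:=x_m+1$; goto $L_j$; (2) $L_i: x_m:=x_m-1$; goto $L_j$; (3) $L_i$: if $x_m>0$ then goto $L_j$; (4) $L_i$: if $x_m=0$ then goto $L_j$; (5) $L_0$: halt; where $i\ge1$. A configuration is $(L,c_1,\dots,c_n)$; a computation is a finite sequence of configurations each obtained from the previous by applying an instruction of $M$ (an instruction at $L_i$ applies only in a configuration with label $L_i$; type (2) requires $x_m\ge1$, type (3) requires $x_m>0$, type (4) requires $x_m=0$). Encoding: distinct propositional literals $r_1,\dots,r_n$, $l_0,l_1,\dots$ (one per label), $\kappa_1,\dots,\kappa_n$; $r^k$ is the tensor of $k$ copies of $r$ (omitted when $k=0$). For an instruction $I$ of type (1)–(4): $\varphi_{(1)}=l_i\multimap(l_j\otimes r_m)$, $\varphi_{(2)}=(l_i\otimes r_m)\multimap l_j$, $\varphi_{(3)}=(l_i\otimes r_m)\multimap(l_j\otimes r_m)$, $\varphi_{(4)}=l_i\multimap(l_j\oplus\kappa_m)$.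 $\Phi_M$ is the multiset of $\varphi_I$ over the instructions of $M$ of types (1)–(4). $\mathcal{K}=\bigcup_{m=1}^n\mathcal{K}_m$, where $\mathcal{K}_m$ consists of $\kappa_m\multimap l_0$ and $(\kappa_m\otimes r_i)\multimap\kappa_m$ for every $i\ne m$. $!\Phi$ denotes $\{!A: A\in\Phi\}$. *)

theory Defs
  imports Main "HOL-Library.Multiset"
begin

datatype 'a form =
    Atom 'a
  | One | Bot | Top | Zero
  | Neg "'a form"
  | Tensor "'a form" "'a form"
  | Par "'a form" "'a form"
  | With "'a form" "'a form"
  | Plus "'a form" "'a form"
  | Lolli "'a form" "'a form"
  | OfCourse "'a form"
  | WhyNot "'a form"

inductive derivable :: "'a form multiset \<Rightarrow> 'a form multiset \<Rightarrow> bool" where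
  ax:      "derivable {#A#} {#A#}"
| cut:     "derivable G (add_mset A D) \<Longrightarrow> derivable (add_mset A G') D'
             \<Longrightarrow> derivable (G + G') (D + D')"
| negL:    "derivable G (add_mset A D) \<Longrightarrow> derivable (add_mset (Neg A) G) D"
| negR:    "derivable (add_mset A G) D \<Longrightarrow> derivable G (add_mset (Neg A) D)"
| oneL:    "derivable G D \<Longrightarrow> derivable (add_mset One G) D"
| oneR:    "derivable {#} {#One#}"
| botL:    "derivable {#Bot#} {#}"
| botR:    "derivable G D \<Longrightarrow> derivable G (add_mset Bot D)"
| topR:    "derivable G (add_mset Top D)"
| zeroL:   "derivable (add_mset Zero G) D"
| tensorL: "derivable (add_mset A (add_mset B G)) D \<Longrightarrow> derivable (add_mset (Tensor A B) G) D"
| tensorR: "derivable G (add_mset A D) \<Longrightarrow> derivable G' (add_mset B D')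
             \<Longrightarrow> derivable (G + G') (add_mset (Tensor A B) (D + D'))"
| parL:    "derivable (add_mset A G) D \<Longrightarrow> derivable (add_mset B G') D'
             \<Longrightarrow> derivable (add_mset (Par A B) (G + G')) (D + D')"
| parR:    "derivable G (add_mset A (add_mset B D)) \<Longrightarrow> derivable G (add_mset (Par A B) D)"
| withL1:  "derivable (add_mset A G) D \<Longrightarrow> derivable (add_mset (With A B) G) D"
| withL2:  "derivable (add_mset B G) D \<Longrightarrow> derivable (add_mset (With A B) G) D"
| withR:   "derivable G (add_mset A D) \<Longrightarrow> derivable G (add_mset B D)
             \<Longrightarrow> derivable G (add_mset (With A B) D)"
| plusL:   "derivable (add_mset A G) D \<Longrightarrow> derivable (add_mset B G) D
             \<Longrightarrow> derivable (add_mset (Plus A B) G) D"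
| plusR1:  "derivable G (add_mset A D) \<Longrightarrow> derivable G (add_mset (Plus A B) D)"
| plusR2:  "derivable G (add_mset B D) \<Longrightarrow> derivable G (add_mset (Plus A B) D)"
| lolliL:  "derivable G (add_mset A D) \<Longrightarrow> derivable (add_mset B G') D'
             \<Longrightarrow> derivable (add_mset (Lolli A B) (G + G')) (D + D')"
| lolliR:  "derivable (add_mset A G) (add_mset B D) \<Longrightarrow> derivable G (add_mset (Lolli A B) D)"
| ocDer:   "derivable (add_mset A G) D \<Longrightarrow> derivable (add_mset (OfCourse A) G) D"
| ocWeak:  "derivable G D \<Longrightarrow> derivable (add_mset (OfCourse A) G) D"
| ocContr: "derivable (add_mset (OfCourse A) (add_mset (OfCourse A) G)) D
             \<Longrightarrow> derivable (add_mset (OfCourse A) G) D"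
| ocProm:  "derivable (image_mset OfCourse G) (add_mset A (image_mset WhyNot D))
             \<Longrightarrow> derivable (image_mset OfCourse G) (add_mset (OfCourse A) (image_mset WhyNot D))"
| wnDer:   "derivable G (add_mset A D) \<Longrightarrow> derivable G (add_mset (WhyNot A) D)"
| wnWeak:  "derivable G D \<Longrightarrow> derivable G (add_mset (WhyNot A) D)"
| wnContr: "derivable G (add_mset (WhyNot A) (add_mset (WhyNot A) D))
             \<Longrightarrow> derivable G (add_mset (WhyNot A) D)"
| wnProm:  "derivable (add_mset A (image_mset OfCourse G)) (image_mset WhyNot D)
             \<Longrightarrow> derivable (add_mset (WhyNot A) (image_mset OfCourse G)) (image_mset WhyNot D)"

text \<open>Instructions of types (1)-(4); the first argument is the counter index m,
  the second the target label j.  Label \<open>L_0\<close> is the halting label (type (5)).\<close>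
datatype instr = Inc nat nat | Dec nat nat | JPos nat nat | JZero nat nat

fun instr_counter :: "instr \<Rightarrow> nat" where
  "instr_counter (Inc m j) = m"
| "instr_counter (Dec m j) = m"
| "instr_counter (JPos m j) = m"
| "instr_counter (JZero m j) = m"

type_synonym machine = "(nat \<times> instr) list"

definition wf_machine :: "nat \<Rightarrow> machine \<Rightarrow> bool" where
  "wf_machine n M \<longleftrightarrow> (\<forall>(i, I) \<in> set M. 1 \<le> i \<and> instr_counter I \<in> {1..n})"

text \<open>Configuration: a label together with the counter values (counter m is \<open>c m\<close>, 1 \<le> m \<le> n).\<close>
type_synonym config = "nat \<times> (nat \<Rightarrow> nat)"

fun instr_step :: "instr \<Rightarrow> (nat \<Rightarrow> nat) \<Rightarrow> config \<Rightarrow> bool" where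
  "instr_step (Inc m j) c (L', c') \<longleftrightarrow> L' = j \<and> c' = c(m := c m + 1)"
| "instr_step (Dec m j) c (L', c') \<longleftrightarrow> c m \<ge> 1 \<and> L' = j \<and> c' = c(m := c m - 1)"
| "instr_step (JPos m j) c (L', c') \<longleftrightarrow> c m > 0 \<and> L' = j \<and> c' = c"
| "instr_step (JZero m j) c (L', c') \<longleftrightarrow> c m = 0 \<and> L' = j \<and> c' = c"

definition step :: "machine \<Rightarrow> config \<Rightarrow> config \<Rightarrow> bool" where
  "step M C C' \<longleftrightarrow> (\<exists>(i, I) \<in> set M. fst C = i \<and> instr_step I (snd C) C')"

definition reaches :: "machine \<Rightarrow> config \<Rightarrow> config \<Rightarrow> bool" where
  "reaches M = (step M)\<^sup>*\<^sup>*"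

datatype lit = R nat | Lab nat | Kap nat

fun phi :: "nat \<times> instr \<Rightarrow> lit form" where
  "phi (i, Inc m j) = Lolli (Atom (Lab i)) (Tensor (Atom (Lab j)) (Atom (R m)))"
| "phi (i, Dec m j) = Lolli (Tensor (Atom (Lab i)) (Atom (R m))) (Atom (Lab j))"
| "phi (i, JPos m j) = Lolli (Tensor (Atom (Lab i)) (Atom (R m))) (Tensor (Atom (Lab j)) (Atom (R m)))"
| "phi (i, JZero m j) = Lolli (Atom (Lab i)) (Plus (Atom (Lab j)) (Atom (Kap m)))"

definition Phi :: "machine \<Rightarrow> lit form multiset" where
  "Phi M = mset (map phi M)"

definition Kset_m :: "nat \<Rightarrow> nat \<Rightarrow> lit form multiset" where
  "Kset_m n m = add_mset (Lolli (Atom (Kap m)) (Atom (Lab 0)))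
      (mset (map (\<lambda>i. Lolli (Tensor (Atom (Kap m)) (Atom (R i))) (Atom (Kap m)))
                 (filter (\<lambda>i. i \<noteq> m) [1..<n+1])))"

definition Kset :: "nat \<Rightarrow> lit form multiset" where
  "Kset n = (\<Sum>m \<in> {1..n}. Kset_m n m)"

fun big_tensor :: "'a form list \<Rightarrow> 'a form" where
  "big_tensor [] = One"
| "big_tensor [A] = A"
| "big_tensor (A # As) = Tensor A (big_tensor As)"

definition init_formula :: "nat \<Rightarrow> (nat \<Rightarrow> nat) \<Rightarrow> lit form" where
  "init_formula n k = big_tensor (Atom (Lab 1) # concat (map (\<lambda>i. replicate (k i) (Atom (R i))) [1..<n+1]))"

end

theory Submission
  imports Defs
begin


definition dot :: "'a multiset set \<Rightarrow> 'a multiset set \<Rightarrow> 'a multiset set" where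
  "dot X Y = {x + y | x y. x \<in> X \<and> y \<in> Y}"

definition perp :: "'a multiset set \<Rightarrow> 'a multiset set \<Rightarrow> 'a multiset set" where
  "perp B X = {y. \<forall>x\<in>X. x + y \<in> B}"

abbreviation cl where "cl B X \<equiv> perp B (perp B X)"

definition oc :: "'a multiset set \<Rightarrow> 'a multiset set \<Rightarrow> 'a multiset set" where
  "oc B X = cl B ({{#}} \<inter> X)"

lemma dot_iff: "z \<in> dot X Y \<longleftrightarrow> (\<exists>x\<in>X. \<exists>y\<in>Y. z = x + y)"
  unfolding dot_def by auto

lemma perp_iff: "y \<in> perp B X \<longleftrightarrow> (\<forall>x\<in>X. x + y \<in> B)"
  unfolding perp_def by auto

lemma dotI: "x \<in> X \<Longrightarrow> y \<in> Y \<Longrightarrow> x + y \<in> dot X Y"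
  unfolding dot_def by blast

lemma dot_comm_sub: "dot X Y \<subseteq> dot Y X"
proof
  fix z assume "z \<in> dot X Y"
  then obtain x y where "x \<in> X" "y \<in> Y" "z = y + x" by (auto simp: dot_iff add.commute)
  thus "z \<in> dot Y X" by (simp add: dotI)
qed

lemma dot_comm: "dot X Y = dot Y X"
  by (rule subset_antisym[OF dot_comm_sub dot_comm_sub])

lemma dot_assoc: "dot (dot X Y) Z = dot X (dot Y Z)"
proof (rule set_eqI)
  fix w
  show "w \<in> dot (dot X Y) Z \<longleftrightarrow> w \<in> dot X (dot Y Z)"
  proof
    assume "w \<in> dot (dot X Y) Z"
    then obtain x y z where "x \<in> X" "y \<in> Y" "z \<in> Z" "w = (x + y) + z" by (auto simp: dot_iff)
    thus "w \<in> dot X (dot Y Z)" by (simp add: dotI add.assoc)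
  next
    assume "w \<in> dot X (dot Y Z)"
    then obtain x y z where "x \<in> X" "y \<in> Y" "z \<in> Z" "w = x + (y + z)" by (auto simp: dot_iff)
    thus "w \<in> dot (dot X Y) Z" by (simp add: dotI add.assoc[symmetric])
  qed
qed

lemma dot_left_comm: "dot X (dot Y Z) = dot Y (dot X Z)"
  by (simp add: dot_assoc[symmetric] dot_comm[of X Y])

lemma dot_zero[simp]: "dot {{#}} X = X" "dot X {{#}} = X"
  unfolding set_eq_iff dot_iff by auto

lemma dot_mono: "X \<subseteq> X' \<Longrightarrow> Y \<subseteq> Y' \<Longrightarrow> dot X Y \<subseteq> dot X' Y'"
  unfolding subset_iff dot_iff by blast

lemma dot_Un: "dot (X \<union> Y) Z = dot X Z \<union> dot Y Z"
  unfolding set_eq_iff Un_iff dot_iff by blast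

lemma sub_perp: "X \<subseteq> perp B Y \<longleftrightarrow> dot X Y \<subseteq> B"
  unfolding perp_iff subset_iff dot_iff by (auto simp: add.commute)

lemma sub_perp': "X \<subseteq> perp B Y \<longleftrightarrow> dot Y X \<subseteq> B"
  using sub_perp[of X B Y] dot_comm[of X Y] by simp

lemma perp_anti: "X \<subseteq> Y \<Longrightarrow> perp B Y \<subseteq> perp B X"
  unfolding subset_iff perp_iff by blast

lemma cl_ext: "X \<subseteq> cl B X"
proof
  fix x assume "x \<in> X"
  show "x \<in> cl B X" unfolding perp_iff[of _ B "perp B X"]
  proof
    fix y assume "y \<in> perp B X"
    hence "x + y \<in> B" using \<open>x \<in> X\<close> by (simp add: perp_iff)
    thus "y + x \<in> B" by (simp add: add.commute)
  qed
qed

lemma perp3[simp]: "perp B (cl B X) = perp B X"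
  by (rule subset_antisym[OF perp_anti[OF cl_ext] cl_ext])

lemma cl_mono: "X \<subseteq> Y \<Longrightarrow> cl B X \<subseteq> cl B Y"
  by (intro perp_anti)

lemma cl_sub_perp: "cl B X \<subseteq> perp B Y \<longleftrightarrow> X \<subseteq> perp B Y"
proof
  assume "cl B X \<subseteq> perp B Y" thus "X \<subseteq> perp B Y" using cl_ext by blast
next
  assume "X \<subseteq> perp B Y"
  hence "cl B X \<subseteq> cl B (perp B Y)" by (rule cl_mono)
  thus "cl B X \<subseteq> perp B Y" by simp
qed

lemma dot_cl: "dot (cl B X) Y \<subseteq> B \<longleftrightarrow> dot X Y \<subseteq> B"
  using sub_perp[of "cl B X" B Y] sub_perp[of X B Y] cl_sub_perp[of B X Y] by simp

lemma dot_cl': "dot Y (cl B X) \<subseteq> B \<longleftrightarrow> dot Y X \<subseteq> B"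
  by (simp add: dot_comm[of Y] dot_cl)

lemma perp_Un: "perp B (X \<union> Y) = perp B X \<inter> perp B Y"
  unfolding perp_def by auto

lemma perp_empty[simp]: "perp B {} = UNIV"
  unfolding perp_def by auto

lemma perp_zero[simp]: "perp B {{#}} = B"
  unfolding perp_def by auto

lemma perp_UNIV_ideal: "dot (perp B UNIV) Y \<subseteq> B"
  unfolding dot_def perp_def by (auto simp: add.commute)

lemma dot_perp_le: "Q \<subseteq> X \<Longrightarrow> dot (perp B X) Q \<subseteq> B"
proof -
  assume "Q \<subseteq> X"
  hence "dot (perp B X) Q \<subseteq> dot (perp B X) X" by (intro dot_mono) auto
  also have "\<dots> \<subseteq> B" using sub_perp[of "perp B X" B X] by (simp add: dot_comm)
  finally show ?thesis .
qed

lemma sub_fact: "dot (perp B X) Q \<subseteq> B \<Longrightarrow> Q \<subseteq> cl B X"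
  by (simp add: sub_perp')

lemma cl_dot_cl: "dot (cl B X) (cl B Y) \<subseteq> cl B (dot X Y)"
proof -
  have "perp B (dot X Y) \<subseteq> perp B (dot X Y)" by simp
  hence "dot (dot X Y) (perp B (dot X Y)) \<subseteq> B" by (simp only: sub_perp')
  hence "dot X (dot Y (perp B (dot X Y))) \<subseteq> B" by (simp add: dot_assoc)
  hence "dot (cl B X) (dot Y (perp B (dot X Y))) \<subseteq> B" by (simp add: dot_cl)
  hence "dot Y (dot (cl B X) (perp B (dot X Y))) \<subseteq> B" by (simp add: dot_left_comm)
  hence "dot (cl B Y) (dot (cl B X) (perp B (dot X Y))) \<subseteq> B" by (simp add: dot_cl)
  hence "dot (dot (cl B X) (cl B Y)) (perp B (dot X Y)) \<subseteq> B"
    by (simp add: dot_assoc dot_left_comm)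
  thus ?thesis by (simp add: sub_perp)
qed

definition prodS :: "'a multiset set multiset \<Rightarrow> 'a multiset set" where
  "prodS M = fold_mset dot {{#}} M"

interpretation dot_cfc: comp_fun_commute dot
  by unfold_locales (auto simp: fun_eq_iff dot_left_comm)

lemma prodS_empty[simp]: "prodS {#} = {{#}}"
  by (simp add: prodS_def)

lemma prodS_add[simp]: "prodS (add_mset X M) = dot X (prodS M)"
  by (simp add: prodS_def)

lemma prodS_union[simp]: "prodS (M + N) = dot (prodS M) (prodS N)"
  by (induct M) (auto simp: dot_assoc)

lemma prodS_mono: "(\<And>x. x \<in># M \<Longrightarrow> f x \<subseteq> g x) \<Longrightarrow> prodS (image_mset f M) \<subseteq> prodS (image_mset g M)"
  by (induct M) (simp_all add: dot_mono)

lemma prodS_zero: "(\<And>X. X \<in># M \<Longrightarrow> {#} \<in> X) \<Longrightarrow> {#} \<in> prodS M"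
  by (induct M) (auto simp: dot_iff)

lemma prodS_oc: "prodS (image_mset (oc B) Ys) \<subseteq> cl B (prodS (image_mset (\<lambda>Y. {{#}} \<inter> Y) Ys))"
proof (induct Ys)
  case empty
  have "{{#}} \<subseteq> cl B {{#}}" by (rule cl_ext)
  then show ?case by simp
next
  case (add Y Ys)
  have "dot (oc B Y) (prodS (image_mset (oc B) Ys))
     \<subseteq> dot (cl B ({{#}} \<inter> Y)) (cl B (prodS (image_mset (\<lambda>Y. {{#}} \<inter> Y) Ys)))"
    by (intro dot_mono) (auto simp: oc_def add)
  also have "\<dots> \<subseteq> cl B (dot ({{#}} \<inter> Y) (prodS (image_mset (\<lambda>Y. {{#}} \<inter> Y) Ys)))"
    by (rule cl_dot_cl)
  finally show ?case by simp
qed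

lemma prodS_zero_part: "prodS (image_mset (\<lambda>Y. {{#}} \<inter> Y) Ys) \<subseteq> {{#}}"
  by (induct Ys) (auto simp: dot_iff)

lemma prodS_zero_sub: "prodS (image_mset (\<lambda>Y. {{#}} \<inter> Y) Ys) \<subseteq> prodS (image_mset (oc B) Ys)"
  by (rule prodS_mono) (auto simp: oc_def intro: cl_ext[THEN subsetD])

lemma promotion:
  assumes "prodS (image_mset (oc B) Ys) \<subseteq> A"
  shows "prodS (image_mset (oc B) Ys) \<subseteq> oc B A"
proof -
  let ?S = "prodS (image_mset (\<lambda>Y. {{#}} \<inter> Y) Ys)"
  have "?S \<subseteq> {{#}} \<inter> A" using prodS_zero_part prodS_zero_sub assms by blast
  hence "cl B ?S \<subseteq> oc B A" unfolding oc_def by (rule cl_mono)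
  thus ?thesis using prodS_oc by blast
qed



declare prodS_union[simp del]

fun sem :: "'a multiset set \<Rightarrow> 'a form \<Rightarrow> 'a multiset set" where
  "sem Pl (Atom a) = cl Pl {{#a#}}"
| "sem Pl One = cl Pl {{#}}"
| "sem Pl Bot = perp Pl {{#}}"
| "sem Pl Top = UNIV"
| "sem Pl Zero = perp Pl UNIV"
| "sem Pl (Neg A) = perp Pl (sem Pl A)"
| "sem Pl (Tensor A B) = cl Pl (dot (sem Pl A) (sem Pl B))"
| "sem Pl (Par A B) = perp Pl (dot (perp Pl (sem Pl A)) (perp Pl (sem Pl B)))"
| "sem Pl (With A B) = sem Pl A \<inter> sem Pl B"
| "sem Pl (Plus A B) = cl Pl (sem Pl A \<union> sem Pl B)"
| "sem Pl (Lolli A B) = perp Pl (dot (sem Pl A) (perp Pl (sem Pl B)))"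
| "sem Pl (OfCourse A) = oc Pl (sem Pl A)"
| "sem Pl (WhyNot A) = perp Pl (oc Pl (perp Pl (sem Pl A)))"

lemma cl_pole[simp]: "cl Pl Pl = Pl"
  using perp3[of Pl "{{#}}"] by (simp del: perp3)

definition dsem where "dsem Pl A = perp Pl (sem Pl A)"

lemma oc_fact[simp]: "cl Pl (oc Pl X) = oc Pl X"
  by (simp add: oc_def)

lemma sem_fact[simp]: "cl Pl (sem Pl A) = sem Pl A"
proof (induction A)
  case Top
  show ?case using cl_ext[of UNIV Pl] by auto
next
  case Bot
  show ?case using perp3[of Pl "{{#}}"] by simp
next
  case (With A B)
  have "cl Pl (sem Pl A \<inter> sem Pl B) \<subseteq> cl Pl (sem Pl A) \<inter> cl Pl (sem Pl B)"
    using cl_mono[of "sem Pl A \<inter> sem Pl B" "sem Pl A" Pl] cl_mono[of "sem Pl A \<inter> sem Pl B" "sem Pl B" Pl]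
    by blast
  thus ?case using With cl_ext[of "sem Pl A \<inter> sem Pl B" Pl] by auto
qed simp_all

definition P where "P Pl G D = prodS (image_mset (sem Pl) G + image_mset (dsem Pl) D)"

lemma P_addL: "P Pl (add_mset A G) D = dot (sem Pl A) (P Pl G D)"
  by (simp add: P_def)

lemma P_addR: "P Pl G (add_mset A D) = dot (dsem Pl A) (P Pl G D)"
  by (simp add: P_def)

lemma P_split: "P Pl (G + G') (D + D') = dot (P Pl G D) (P Pl G' D')"
proof -
  have "image_mset (sem Pl) (G + G') + image_mset (dsem Pl) (D + D')
      = (image_mset (sem Pl) G + image_mset (dsem Pl) D) + (image_mset (sem Pl) G' + image_mset (dsem Pl) D')"
    by (simp add: add_ac)
  thus ?thesis unfolding P_def by (simp only: prodS_union)
qed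

lemma P_oc: "P Pl (image_mset OfCourse G) (image_mset WhyNot D)
   = prodS (image_mset (oc Pl) (image_mset (sem Pl) G + image_mset (dsem Pl) D))"
  by (simp add: P_def image_mset.compositionality comp_def dsem_def)

lemma sub_sem: "dot (dsem Pl A) Q \<subseteq> Pl \<Longrightarrow> Q \<subseteq> sem Pl A"
  unfolding dsem_def using sub_fact[of Pl "sem Pl A" Q] by simp

lemma sem_sub: "Q \<subseteq> sem Pl A \<Longrightarrow> dot (dsem Pl A) Q \<subseteq> Pl"
  unfolding dsem_def by (rule dot_perp_le)

lemma dot_perp_pole: "Q \<subseteq> Pl \<Longrightarrow> dot (perp Pl Pl) Q \<subseteq> Pl"
  using dot_cl[of Pl "{{#}}" Q] by simp

lemma contr_aux: "dot ({{#}} \<inter> X) Q \<subseteq> dot ({{#}} \<inter> X) (dot ({{#}} \<inter> X) Q)"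
proof
  fix z assume "z \<in> dot ({{#}} \<inter> X) Q"
  then obtain q where "{#} \<in> X" "q \<in> Q" "z = {#} + ({#} + q)" by (auto simp: dot_iff)
  thus "z \<in> dot ({{#}} \<inter> X) (dot ({{#}} \<inter> X) Q)" by (simp add: dotI)
qed

lemma oc_der: "dot X Q \<subseteq> Pl \<Longrightarrow> dot (oc Pl X) Q \<subseteq> Pl"
  unfolding oc_def dot_cl using dot_mono[of "{{#}} \<inter> X" X Q Q] by blast

lemma oc_weak: "Q \<subseteq> Pl \<Longrightarrow> dot (oc Pl X) Q \<subseteq> Pl"
  unfolding oc_def dot_cl using dot_mono[of "{{#}} \<inter> X" "{{#}}" Q Q] by auto

lemma oc_contr: "dot (oc Pl X) (dot (oc Pl X) Q) \<subseteq> Pl \<Longrightarrow> dot (oc Pl X) Q \<subseteq> Pl"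
proof -
  assume h: "dot (oc Pl X) (dot (oc Pl X) Q) \<subseteq> Pl"
  have s: "{{#}} \<inter> X \<subseteq> oc Pl X" unfolding oc_def by (rule cl_ext)
  have "dot ({{#}} \<inter> X) Q \<subseteq> dot (oc Pl X) (dot (oc Pl X) Q)"
    using contr_aux[of X Q] dot_mono[OF s dot_mono[OF s order_refl]] by blast
  hence "dot ({{#}} \<inter> X) Q \<subseteq> Pl" using h by blast
  thus ?thesis unfolding oc_def dot_cl .
qed

lemma sound: "derivable G D \<Longrightarrow> P Pl G D \<subseteq> Pl"
proof (induction rule: derivable.induct)
  case (ax A)
  have "P Pl {#} {#} = {{#}}" by (simp add: P_def)
  moreover have "dot (sem Pl A) (perp Pl (sem Pl A)) \<subseteq> Pl"
    using sub_perp[of "sem Pl A" Pl "perp Pl (sem Pl A)"] cl_ext[of "sem Pl A" Pl] by simp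
  ultimately show ?case by (simp add: P_addL P_addR dsem_def dot_comm[of "perp Pl (sem Pl A)"])
next
  case (cut G A D G' D')
  have "P Pl G D \<subseteq> sem Pl A" using cut.IH(1) by (simp add: P_addR sub_sem)
  hence "dot (P Pl G D) (P Pl G' D') \<subseteq> dot (sem Pl A) (P Pl G' D')" by (simp add: dot_mono)
  thus ?case using cut.IH(2) by (simp add: P_addL P_split)
next
  case (negL G A D)
  thus ?case by (simp add: P_addL P_addR dsem_def)
next
  case (negR A G D)
  thus ?case by (simp add: P_addL P_addR dsem_def)
next
  case (oneL G D)
  thus ?case by (simp add: P_addL dot_perp_pole)
next
  case oneR
  show ?case by (simp add: P_def dsem_def)
next
  case botL
  show ?case by (simp add: P_def dsem_def)
next
  case (botR G D)
  thus ?case by (simp add: P_addR dsem_def dot_perp_pole)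
next
  case (topR G D)
  show ?case by (simp add: P_addR dsem_def perp_UNIV_ideal)
next
  case (zeroL G D)
  show ?case by (simp add: P_addL perp_UNIV_ideal)
next
  case (tensorL A B G D)
  thus ?case by (simp add: P_addL dot_cl dot_assoc)
next
  case (tensorR G A D G' B D')
  have "P Pl G D \<subseteq> sem Pl A" using tensorR.IH(1) by (simp add: P_addR sub_sem)
  moreover have "P Pl G' D' \<subseteq> sem Pl B" using tensorR.IH(2) by (simp add: P_addR sub_sem)
  ultimately have "dot (P Pl G D) (P Pl G' D') \<subseteq> dot (sem Pl A) (sem Pl B)"
    by (rule dot_mono)
  hence "dot (P Pl G D) (P Pl G' D') \<subseteq> sem Pl (Tensor A B)"
    using cl_ext[of "dot (sem Pl A) (sem Pl B)" Pl] by simp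
  hence "dot (dsem Pl (Tensor A B)) (dot (P Pl G D) (P Pl G' D')) \<subseteq> Pl" by (rule sem_sub)
  thus ?case by (simp only: P_addR P_split)
next
  case (parL A G D B G' D')
  have "P Pl G D \<subseteq> perp Pl (sem Pl A)" using parL.IH(1) by (simp add: P_addL sub_perp')
  moreover have "P Pl G' D' \<subseteq> perp Pl (sem Pl B)" using parL.IH(2) by (simp add: P_addL sub_perp')
  ultimately have "dot (P Pl G D) (P Pl G' D') \<subseteq> dot (perp Pl (sem Pl A)) (perp Pl (sem Pl B))"
    by (simp add: dot_mono)
  thus ?case by (simp add: P_addL P_split dot_perp_le)
next
  case (parR G A B D)
  thus ?case by (simp add: P_addR dsem_def dot_cl dot_assoc)
next
  case (withL1 A G D B)
  thus ?case using dot_mono[of "sem Pl A \<inter> sem Pl B" "sem Pl A" "P Pl G D" "P Pl G D"]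
    by (auto simp add: P_addL)
next
  case (withL2 B G D A)
  thus ?case using dot_mono[of "sem Pl A \<inter> sem Pl B" "sem Pl B" "P Pl G D" "P Pl G D"]
    by (auto simp add: P_addL)
next
  case (withR G A D B)
  have "P Pl G D \<subseteq> sem Pl A" using withR.IH(1) by (simp add: P_addR sub_sem)
  moreover have "P Pl G D \<subseteq> sem Pl B" using withR.IH(2) by (simp add: P_addR sub_sem)
  ultimately have "P Pl G D \<subseteq> sem Pl (With A B)" by simp
  hence "dot (dsem Pl (With A B)) (P Pl G D) \<subseteq> Pl" by (rule sem_sub)
  thus ?case by (simp only: P_addR)
next
  case (plusL A G D B)
  thus ?case by (simp add: P_addL dot_cl dot_Un)
next
  case (plusR1 G A D B)
  have "perp Pl (sem Pl (Plus A B)) \<subseteq> perp Pl (sem Pl A)"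
    by (rule perp_anti) (auto intro: cl_ext[THEN subsetD])
  hence "dot (dsem Pl (Plus A B)) (P Pl G D) \<subseteq> dot (dsem Pl A) (P Pl G D)"
    unfolding dsem_def by (rule dot_mono) auto
  thus ?case using plusR1.IH by (simp only: P_addR)
next
  case (plusR2 G B D A)
  have "perp Pl (sem Pl (Plus A B)) \<subseteq> perp Pl (sem Pl B)"
    by (rule perp_anti) (auto intro: cl_ext[THEN subsetD])
  hence "dot (dsem Pl (Plus A B)) (P Pl G D) \<subseteq> dot (dsem Pl B) (P Pl G D)"
    unfolding dsem_def by (rule dot_mono) auto
  thus ?case using plusR2.IH by (simp only: P_addR)
next
  case (lolliL G A D B G' D')
  have "P Pl G D \<subseteq> sem Pl A" using lolliL.IH(1) by (simp add: P_addR sub_sem)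
  moreover have "P Pl G' D' \<subseteq> perp Pl (sem Pl B)" using lolliL.IH(2) by (simp add: P_addL sub_perp')
  ultimately have "dot (P Pl G D) (P Pl G' D') \<subseteq> dot (sem Pl A) (perp Pl (sem Pl B))"
    by (simp add: dot_mono)
  thus ?case by (simp add: P_addL P_split dot_perp_le)
next
  case (lolliR A G B D)
  thus ?case by (simp add: P_addR P_addL dsem_def dot_cl dot_assoc dot_left_comm[of "sem Pl A"])
next
  case (ocDer A G D)
  thus ?case by (simp add: P_addL oc_der)
next
  case (ocWeak G D A)
  thus ?case by (simp add: P_addL oc_weak)
next
  case (ocContr A G D)
  thus ?case by (simp add: P_addL oc_contr)
next
  case (ocProm G A D)
  let ?O = "P Pl (image_mset OfCourse G) (image_mset WhyNot D)"
  have "?O \<subseteq> sem Pl A" using ocProm.IH by (simp add: P_addR sub_sem)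
  hence "?O \<subseteq> oc Pl (sem Pl A)" unfolding P_oc by (rule promotion)
  thus ?case using sem_sub[of ?O Pl "OfCourse A"] by (simp add: P_addR)
next
  case (wnDer G A D)
  thus ?case by (simp add: P_addR dsem_def oc_der)
next
  case (wnWeak G D A)
  thus ?case by (simp add: P_addR dsem_def oc_weak)
next
  case (wnContr G A D)
  thus ?case by (simp add: P_addR dsem_def oc_contr)
next
  case (wnProm A G D)
  let ?O = "P Pl (image_mset OfCourse G) (image_mset WhyNot D)"
  have "?O \<subseteq> perp Pl (sem Pl A)" using wnProm.IH by (simp add: P_addL sub_perp')
  hence "?O \<subseteq> oc Pl (perp Pl (sem Pl A))" unfolding P_oc by (rule promotion)
  hence "dot (perp Pl (oc Pl (perp Pl (sem Pl A)))) ?O \<subseteq> Pl" by (rule dot_perp_le)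
  thus ?case by (simp add: P_addL)
qed



definition agree :: "nat \<Rightarrow> (nat \<Rightarrow> nat) \<Rightarrow> lit multiset \<Rightarrow> bool" where
  "agree n c rs \<longleftrightarrow> (\<forall>m\<in>{1..n}. c m = count rs (R m))"

definition GL :: "nat \<Rightarrow> machine \<Rightarrow> nat \<Rightarrow> lit multiset \<Rightarrow> bool" where
  "GL n M i rs \<longleftrightarrow> set_mset rs \<subseteq> R ` {1..n} \<and>
     (\<forall>c. agree n c rs \<longrightarrow> (\<exists>c'. reaches M (i, c) (0, c') \<and> (\<forall>m\<in>{1..n}. c' m = 0)))"

definition Good :: "nat \<Rightarrow> machine \<Rightarrow> lit multiset set" where
  "Good n M = {w. (\<exists>i rs. w = add_mset (Lab i) rs \<and> GL n M i rs) \<or>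
      (\<exists>m rs. m \<in> {1..n} \<and> w = add_mset (Kap m) rs \<and> set_mset rs \<subseteq> R ` ({1..n} - {m}))}"

lemma GoodLab: "add_mset (Lab i) rs \<in> Good n M \<longleftrightarrow> GL n M i rs"
proof
  assume "add_mset (Lab i) rs \<in> Good n M"
  then consider (a) i' rs' where "add_mset (Lab i) rs = add_mset (Lab i') rs'" "GL n M i' rs'"
    | (b) m rs' where "add_mset (Lab i) rs = add_mset (Kap m) rs'" "set_mset rs' \<subseteq> R ` ({1..n} - {m})"
    unfolding Good_def by blast
  then show "GL n M i rs"
  proof cases
    case a
    show ?thesis
    proof (cases "i = i'")
      case True
      with a show ?thesis by simp
    next
      case False
      have "Lab i \<in># add_mset (Lab i') rs'" unfolding a(1)[symmetric] by simp
      hence "Lab i \<in># rs'" using False by simp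
      thus ?thesis using a(2) unfolding GL_def by auto
    qed
  next
    case b
    have "Lab i \<in># add_mset (Kap m) rs'" unfolding b(1)[symmetric] by simp
    hence "Lab i \<in># rs'" by simp
    thus ?thesis using b(2) by auto
  qed
next
  assume "GL n M i rs" thus "add_mset (Lab i) rs \<in> Good n M" unfolding Good_def by blast
qed

lemma GoodKap: "add_mset (Kap m) rs \<in> Good n M \<longleftrightarrow> m \<in> {1..n} \<and> set_mset rs \<subseteq> R ` ({1..n} - {m})"
proof
  assume "add_mset (Kap m) rs \<in> Good n M"
  then consider (a) i' rs' where "add_mset (Kap m) rs = add_mset (Lab i') rs'" "GL n M i' rs'"
    | (b) m' rs' where "m' \<in> {1..n}" "add_mset (Kap m) rs = add_mset (Kap m') rs'" "set_mset rs' \<subseteq> R ` ({1..n} - {m'})"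
    unfolding Good_def by blast
  then show "m \<in> {1..n} \<and> set_mset rs \<subseteq> R ` ({1..n} - {m})"
  proof cases
    case a
    have "Kap m \<in># add_mset (Lab i') rs'" unfolding a(1)[symmetric] by simp
    hence "Kap m \<in># rs'" by simp
    thus ?thesis using a(2) unfolding GL_def by auto
  next
    case b
    show ?thesis
    proof (cases "m = m'")
      case True
      with b show ?thesis by simp
    next
      case False
      have "Kap m \<in># add_mset (Kap m') rs'" unfolding b(2)[symmetric] by simp
      hence "Kap m \<in># rs'" using False by simp
      thus ?thesis using b(3) by auto
    qed
  qed
next
  assume "m \<in> {1..n} \<and> set_mset rs \<subseteq> R ` ({1..n} - {m})"
  thus "add_mset (Kap m) rs \<in> Good n M" unfolding Good_def by blast
qed

lemma reach_step:
  assumes "(i, I) \<in> set M" "instr_step I c C" "reaches M C D"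
  shows "reaches M (i, c) D"
proof -
  have "step M (i, c) C" unfolding step_def using assms(1,2) by fastforce
  thus ?thesis using assms(3) unfolding reaches_def by (rule converse_rtranclp_into_rtranclp)
qed

lemma reach_zero:
  assumes "wf_machine n M" "reaches M (0, c) C"
  shows "C = (0, c)"
proof -
  from assms(2) have "(step M)\<^sup>*\<^sup>* (0, c) C" by (simp add: reaches_def)
  thus ?thesis
  proof (rule converse_rtranclpE)
    assume "(0, c) = C" thus ?thesis by simp
  next
    fix y assume "step M (0, c) y"
    then obtain i I where "(i, I) \<in> set M" "i = 0" unfolding step_def by auto
    with assms(1) show ?thesis unfolding wf_machine_def by auto
  qed
qed

lemma GL_Inc:
  assumes "wf_machine n M" "(i, Inc m j) \<in> set M" "GL n M j (add_mset (R m) y)"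
  shows "GL n M i y"
  unfolding GL_def
proof (intro conjI allI impI)
  show "set_mset y \<subseteq> R ` {1..n}" using assms(3) unfolding GL_def by auto
  fix c assume ag: "agree n c y"
  have "agree n (c(m := c m + 1)) (add_mset (R m) y)" using ag unfolding agree_def by auto
  then obtain c' where "reaches M (j, c(m := c m + 1)) (0, c')" "\<forall>m\<in>{1..n}. c' m = 0"
    using assms(3) unfolding GL_def by blast
  moreover have "instr_step (Inc m j) c (j, c(m := c m + 1))" by simp
  ultimately show "\<exists>c'. reaches M (i, c) (0, c') \<and> (\<forall>m\<in>{1..n}. c' m = 0)"
    using reach_step[OF assms(2)] by blast
qed

lemma GL_Dec:
  assumes "wf_machine n M" "(i, Dec m j) \<in> set M" "GL n M j y"
  shows "GL n M i (add_mset (R m) y)"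
  unfolding GL_def
proof (intro conjI allI impI)
  have m: "m \<in> {1..n}" using assms(1,2) unfolding wf_machine_def by fastforce
  show "set_mset (add_mset (R m) y) \<subseteq> R ` {1..n}" using assms(3) m unfolding GL_def by auto
  fix c assume ag: "agree n c (add_mset (R m) y)"
  hence cm: "c m \<ge> 1" using m unfolding agree_def by auto
  have "agree n (c(m := c m - 1)) y" using ag unfolding agree_def by auto
  then obtain c' where "reaches M (j, c(m := c m - 1)) (0, c')" "\<forall>m\<in>{1..n}. c' m = 0"
    using assms(3) unfolding GL_def by blast
  moreover have "instr_step (Dec m j) c (j, c(m := c m - 1))" using cm by simp
  ultimately show "\<exists>c'. reaches M (i, c) (0, c') \<and> (\<forall>m\<in>{1..n}. c' m = 0)"
    using reach_step[OF assms(2)] by blast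
qed

lemma GL_JPos:
  assumes "wf_machine n M" "(i, JPos m j) \<in> set M" "GL n M j (add_mset (R m) y)"
  shows "GL n M i (add_mset (R m) y)"
  unfolding GL_def
proof (intro conjI allI impI)
  have m: "m \<in> {1..n}" using assms(1,2) unfolding wf_machine_def by fastforce
  show "set_mset (add_mset (R m) y) \<subseteq> R ` {1..n}" using assms(3) unfolding GL_def by auto
  fix c assume ag: "agree n c (add_mset (R m) y)"
  hence cm: "c m > 0" using m unfolding agree_def by auto
  obtain c' where "reaches M (j, c) (0, c')" "\<forall>m\<in>{1..n}. c' m = 0"
    using assms(3) ag unfolding GL_def by blast
  moreover have "instr_step (JPos m j) c (j, c)" using cm by simp
  ultimately show "\<exists>c'. reaches M (i, c) (0, c') \<and> (\<forall>m\<in>{1..n}. c' m = 0)"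
    using reach_step[OF assms(2)] by blast
qed

lemma GL_JZero:
  assumes "wf_machine n M" "(i, JZero m j) \<in> set M" "GL n M j y"
    "set_mset y \<subseteq> R ` ({1..n} - {m})"
  shows "GL n M i y"
  unfolding GL_def
proof (intro conjI allI impI)
  have m: "m \<in> {1..n}" using assms(1,2) unfolding wf_machine_def by fastforce
  show "set_mset y \<subseteq> R ` {1..n}" using assms(3) unfolding GL_def by auto
  fix c assume ag: "agree n c y"
  have "R m \<notin># y" using assms(4) by auto
  hence cm: "c m = 0" using m ag unfolding agree_def by (simp add: not_in_iff)
  obtain c' where "reaches M (j, c) (0, c')" "\<forall>m\<in>{1..n}. c' m = 0"
    using assms(3) ag unfolding GL_def by blast
  moreover have "instr_step (JZero m j) c (j, c)" using cm by simp
  ultimately show "\<exists>c'. reaches M (i, c) (0, c') \<and> (\<forall>m\<in>{1..n}. c' m = 0)"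
    using reach_step[OF assms(2)] by blast
qed

lemma GL_zero_empty:
  assumes "wf_machine n M" "GL n M 0 y"
  shows "y = {#}"
proof -
  have ag: "agree n (\<lambda>m. count y (R m)) y" unfolding agree_def by simp
  then obtain c' where "reaches M (0, \<lambda>m. count y (R m)) (0, c')" "\<forall>m\<in>{1..n}. c' m = 0"
    using assms(2) unfolding GL_def by blast
  hence z: "\<forall>m\<in>{1..n}. count y (R m) = 0" using reach_zero[OF assms(1)] by fastforce
  have s: "set_mset y \<subseteq> R ` {1..n}" using assms(2) unfolding GL_def by auto
  show ?thesis
  proof (rule ccontr)
    assume "y \<noteq> {#}"
    then obtain x where "x \<in># y" by blast
    with s obtain m where "m \<in> {1..n}" "R m \<in># y" by auto
    with z have "count y (R m) = 0" by blast
    with \<open>R m \<in># y\<close> show False by (simp add: not_in_iff[symmetric])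
  qed
qed

lemma GL_zero: "GL n M 0 {#}"
  unfolding GL_def agree_def reaches_def by auto



lemma dot_single: "dot {a} {b} = {a + b}"
  unfolding dot_def by auto

lemma lolli_zero:
  assumes "\<And>y. y \<in> perp Pl (sem Pl F2) \<Longrightarrow> dot (sem Pl F1) {y} \<subseteq> Pl"
  shows "{#} \<in> sem Pl (Lolli F1 F2)"
proof -
  have "dot (sem Pl F1) (perp Pl (sem Pl F2)) \<subseteq> Pl"
  proof
    fix z assume "z \<in> dot (sem Pl F1) (perp Pl (sem Pl F2))"
    then obtain x y where "x \<in> sem Pl F1" "y \<in> perp Pl (sem Pl F2)" "z = x + y" by (auto simp: dot_iff)
    thus "z \<in> Pl" using assms[of y] dotI[of x "sem Pl F1" y "{y}"] by blast
  qed
  thus ?thesis by (simp add: perp_iff subset_iff dot_iff)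
qed

lemma cl_single_ok: "a + y \<in> Pl \<Longrightarrow> dot (cl Pl {a}) {y} \<subseteq> Pl"
  by (simp add: dot_cl dot_single)

lemma cl_tensor_ok: "a + b + y \<in> Pl \<Longrightarrow> dot (cl Pl (dot (cl Pl {a}) (cl Pl {b}))) {y} \<subseteq> Pl"
proof -
  assume h: "a + b + y \<in> Pl"
  have "dot {b} (dot {a} {y}) \<subseteq> Pl" using h by (simp add: dot_single ac_simps)
  hence "dot (cl Pl {b}) (dot {a} {y}) \<subseteq> Pl" by (simp only: dot_cl)
  hence "dot {a} (dot (cl Pl {b}) {y}) \<subseteq> Pl" by (simp only: dot_left_comm)
  hence "dot (cl Pl {a}) (dot (cl Pl {b}) {y}) \<subseteq> Pl" by (simp only: dot_cl)
  hence "dot (dot (cl Pl {a}) (cl Pl {b})) {y} \<subseteq> Pl" by (simp only: dot_assoc)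
  thus ?thesis by (simp only: dot_cl)
qed

lemma perp_mem: "y \<in> perp Pl X \<Longrightarrow> x \<in> X \<Longrightarrow> x + y \<in> Pl"
  by (simp add: perp_iff)

lemma mem_atom: "{#l#} \<in> sem Pl (Atom l)"
  using cl_ext[of "{{#l#}}" Pl] by auto

lemma mem_tensor: "x \<in> sem Pl F1 \<Longrightarrow> y \<in> sem Pl F2 \<Longrightarrow> x + y \<in> sem Pl (Tensor F1 F2)"
  using cl_ext[of "dot (sem Pl F1) (sem Pl F2)" Pl] dotI[of x "sem Pl F1" y "sem Pl F2"] by auto

lemma mem_plus1: "x \<in> sem Pl F1 \<Longrightarrow> x \<in> sem Pl (Plus F1 F2)"
  using cl_ext[of "sem Pl F1 \<union> sem Pl F2" Pl] by auto

lemma mem_plus2: "x \<in> sem Pl F2 \<Longrightarrow> x \<in> sem Pl (Plus F1 F2)"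
  using cl_ext[of "sem Pl F1 \<union> sem Pl F2" Pl] by auto

lemma perp_atom: "y \<in> perp Pl (sem Pl (Atom l)) \<Longrightarrow> add_mset l y \<in> Pl"
  using perp_mem[of y Pl "sem Pl (Atom l)" "{#l#}"] mem_atom[of l Pl] by simp

lemma perp_tensor: "y \<in> perp Pl (sem Pl (Tensor (Atom l) (Atom r))) \<Longrightarrow> add_mset l (add_mset r y) \<in> Pl"
  using perp_mem[of y Pl "sem Pl (Tensor (Atom l) (Atom r))" "{#l#} + {#r#}"]
    mem_tensor[OF mem_atom[of l Pl] mem_atom[of r Pl]] by (simp add: add_mset_commute[of l r])

lemma left_atom: "add_mset l y \<in> Pl \<Longrightarrow> dot (sem Pl (Atom l)) {y} \<subseteq> Pl"
  by (simp only: sem.simps) (rule cl_single_ok, simp)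

lemma left_tensor:
  assumes "add_mset l (add_mset r y) \<in> Pl"
  shows "dot (sem Pl (Tensor (Atom l) (Atom r))) {y} \<subseteq> Pl"
proof -
  have e: "{#l#} + {#r#} + y = add_mset l (add_mset r y)" by simp
  have "{#l#} + {#r#} + y \<in> Pl" unfolding e by (rule assms)
  hence "dot (cl Pl (dot (cl Pl {{#l#}}) (cl Pl {{#r#}}))) {y} \<subseteq> Pl" by (rule cl_tensor_ok)
  thus ?thesis by (simp only: sem.simps)
qed

lemma phi_zero:
  assumes wf: "wf_machine n M" and p: "(i, I) \<in> set M"
  shows "{#} \<in> sem (Good n M) (phi (i, I))"
proof (cases I)
  case (Inc m j)
  show ?thesis unfolding Inc phi.simps
  proof (rule lolli_zero)
    fix y assume "y \<in> perp (Good n M) (sem (Good n M) (Tensor (Atom (Lab j)) (Atom (R m))))"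
    hence "add_mset (Lab j) (add_mset (R m) y) \<in> Good n M" by (rule perp_tensor)
    hence "GL n M j (add_mset (R m) y)" by (simp only: GoodLab)
    hence "GL n M i y" by (rule GL_Inc[OF wf p[unfolded Inc]])
    hence "add_mset (Lab i) y \<in> Good n M" by (simp only: GoodLab)
    thus "dot (sem (Good n M) (Atom (Lab i))) {y} \<subseteq> Good n M" by (rule left_atom)
  qed
next
  case (Dec m j)
  show ?thesis unfolding Dec phi.simps
  proof (rule lolli_zero)
    fix y assume "y \<in> perp (Good n M) (sem (Good n M) (Atom (Lab j)))"
    hence "add_mset (Lab j) y \<in> Good n M" by (rule perp_atom)
    hence "GL n M j y" by (simp only: GoodLab)
    hence "GL n M i (add_mset (R m) y)" by (rule GL_Dec[OF wf p[unfolded Dec]])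
    hence "add_mset (Lab i) (add_mset (R m) y) \<in> Good n M" by (simp only: GoodLab)
    thus "dot (sem (Good n M) (Tensor (Atom (Lab i)) (Atom (R m)))) {y} \<subseteq> Good n M"
      by (rule left_tensor)
  qed
next
  case (JPos m j)
  show ?thesis unfolding JPos phi.simps
  proof (rule lolli_zero)
    fix y assume "y \<in> perp (Good n M) (sem (Good n M) (Tensor (Atom (Lab j)) (Atom (R m))))"
    hence "add_mset (Lab j) (add_mset (R m) y) \<in> Good n M" by (rule perp_tensor)
    hence "GL n M j (add_mset (R m) y)" by (simp only: GoodLab)
    hence "GL n M i (add_mset (R m) y)" by (rule GL_JPos[OF wf p[unfolded JPos]])
    hence "add_mset (Lab i) (add_mset (R m) y) \<in> Good n M" by (simp only: GoodLab)
    thus "dot (sem (Good n M) (Tensor (Atom (Lab i)) (Atom (R m)))) {y} \<subseteq> Good n M"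
      by (rule left_tensor)
  qed
next
  case (JZero m j)
  show ?thesis unfolding JZero phi.simps
  proof (rule lolli_zero)
    fix y assume y: "y \<in> perp (Good n M) (sem (Good n M) (Plus (Atom (Lab j)) (Atom (Kap m))))"
    have "add_mset (Lab j) y \<in> Good n M"
      using perp_mem[OF y mem_plus1[OF mem_atom]] by simp
    hence g: "GL n M j y" by (simp only: GoodLab)
    have "add_mset (Kap m) y \<in> Good n M"
      using perp_mem[OF y mem_plus2[OF mem_atom]] by simp
    hence "set_mset y \<subseteq> R ` ({1..n} - {m})" by (simp only: GoodKap)
    hence "GL n M i y" by (rule GL_JZero[OF wf p[unfolded JZero] g])
    hence "add_mset (Lab i) y \<in> Good n M" by (simp only: GoodLab)
    thus "dot (sem (Good n M) (Atom (Lab i))) {y} \<subseteq> Good n M" by (rule left_atom)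
  qed
qed

lemma Kset_zero:
  assumes wf: "wf_machine n M" and f: "f \<in># Kset n"
  shows "{#} \<in> sem (Good n M) f"
proof -
  obtain m where m: "m \<in> {1..n}" "f \<in># Kset_m n m"
    using f unfolding Kset_def by (auto simp: set_mset_sum)
  then consider (a) "f = Lolli (Atom (Kap m)) (Atom (Lab 0))"
    | (b) i where "i \<in> {1..n}" "i \<noteq> m" "f = Lolli (Tensor (Atom (Kap m)) (Atom (R i))) (Atom (Kap m))"
    unfolding Kset_m_def by (auto simp del: upt_Suc)
  then show ?thesis
  proof cases
    case a
    show ?thesis unfolding a
    proof (rule lolli_zero)
      fix y assume "y \<in> perp (Good n M) (sem (Good n M) (Atom (Lab 0)))"
      hence "add_mset (Lab 0) y \<in> Good n M" by (rule perp_atom)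
      hence "GL n M 0 y" by (simp only: GoodLab)
      hence "y = {#}" by (rule GL_zero_empty[OF wf])
      hence "add_mset (Kap m) y \<in> Good n M" using GoodKap m(1) by simp
      thus "dot (sem (Good n M) (Atom (Kap m))) {y} \<subseteq> Good n M" by (rule left_atom)
    qed
  next
    case b
    show ?thesis unfolding b(3)
    proof (rule lolli_zero)
      fix y assume "y \<in> perp (Good n M) (sem (Good n M) (Atom (Kap m)))"
      hence "add_mset (Kap m) y \<in> Good n M" by (rule perp_atom)
      hence "set_mset y \<subseteq> R ` ({1..n} - {m})" by (simp only: GoodKap)
      hence "add_mset (Kap m) (add_mset (R i) y) \<in> Good n M" using GoodKap m(1) b(1,2) by auto
      thus "dot (sem (Good n M) (Tensor (Atom (Kap m)) (Atom (R i)))) {y} \<subseteq> Good n M"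
        by (rule left_tensor)
    qed
  qed
qed

lemma big_tensor_mem: "mset xs \<in> sem Pl (big_tensor (map Atom xs))"
proof (induction xs rule: induct_list012)
  case 1
  show ?case using cl_ext[of "{{#}}" Pl] by auto
next
  case (2 x)
  show ?case using mem_atom[of x Pl] by simp
next
  case (3 x y zs)
  have e1: "mset (x # y # zs) = {#x#} + mset (y # zs)" by simp
  have e2: "big_tensor (map Atom (x # y # zs)) = Tensor (Atom x) (big_tensor (map Atom (y # zs)))" by simp
  show ?case unfolding e1 e2 by (rule mem_tensor[OF mem_atom 3(2)])
qed

lemma count_concat: "distinct ys \<Longrightarrow>
  count (mset (concat (map (\<lambda>i. replicate (k i) (R i)) ys))) (R m) = (if m \<in> set ys then k m else 0)"
  by (induction ys) auto

lemma oc_zero: "{#} \<in> X \<Longrightarrow> {#} \<in> oc Pl X"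
  unfolding oc_def using cl_ext[of "{{#}} \<inter> X" Pl] by blast

theorem theorem3:
  fixes n :: nat and M :: machine and k :: "nat \<Rightarrow> nat"
  assumes "wf_machine n M"
    and "derivable
           (add_mset (init_formula n k)
              (image_mset OfCourse (Phi M) + image_mset OfCourse (Kset n)))
           {#Atom (Lab 0)#}"
  shows "\<exists>c. reaches M (1, k) (0, c) \<and> (\<forall>i \<in> {1..n}. c i = 0)"
proof -
  let ?G = "Good n M"
  let ?xs = "concat (map (\<lambda>i. replicate (k i) (R i)) [1..<n+1])"
  let ?H = "image_mset OfCourse (Phi M) + image_mset OfCourse (Kset n)"
  have S: "P ?G (add_mset (init_formula n k) ?H) (add_mset (Atom (Lab 0)) {#}) \<subseteq> ?G"
    using sound[OF assms(2)] by simp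
  have init: "init_formula n k = big_tensor (map Atom (Lab 1 # ?xs))"
    unfolding init_formula_def by (simp add: map_concat comp_def del: upt_Suc)
  have w: "add_mset (Lab 1) (mset ?xs) \<in> sem ?G (init_formula n k)"
    unfolding init using big_tensor_mem[of "Lab 1 # ?xs" ?G] by simp
  have d: "{#} \<in> dsem ?G (Atom (Lab 0))"
  proof -
    have "add_mset (Lab 0) {#} \<in> ?G" using GL_zero by (simp only: GoodLab)
    thus ?thesis unfolding dsem_def perp3 by (simp add: perp_iff)
  qed
  have h0: "{#} \<in> prodS (image_mset (sem ?G) ?H)"
  proof (rule prodS_zero)
    fix X assume "X \<in># image_mset (sem ?G) ?H"
    then obtain f where "f \<in># Phi M + Kset n" "X = oc ?G (sem ?G f)" by fastforce
    moreover have "{#} \<in> sem ?G f"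
      using \<open>f \<in># Phi M + Kset n\<close> Kset_zero[OF assms(1)] phi_zero[OF assms(1)]
      unfolding Phi_def by auto
    ultimately show "{#} \<in> X" using oc_zero by blast
  qed
  have h: "{#} \<in> P ?G ?H {#}" using h0 by (simp add: P_def)
  have "{#} + (add_mset (Lab 1) (mset ?xs) + {#}) \<in> P ?G (add_mset (init_formula n k) ?H) (add_mset (Atom (Lab 0)) {#})"
    unfolding P_addL P_addR by (rule dotI[OF d dotI[OF w h]])
  hence "add_mset (Lab 1) (mset ?xs) \<in> ?G" using S by auto
  hence gl: "GL n M 1 (mset ?xs)" by (simp only: GoodLab)
  have "agree n k (mset ?xs)"
    unfolding agree_def by (simp add: count_concat atLeastLessThanSuc_atLeastAtMost)
  thus ?thesis using gl unfolding GL_def by blast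
qed


end
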